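(* Let $D$ be a non-commutative division ring and $R$ a maximal subring of $D$. Assume there exists a nonzero non-unit $a\in R$ with $aR=Ra$. Then: (1) $X=\{1,a,a^2,\ldots\}$ is a left and right Ore set in $R$, and $D=X^{-1}R=\{a^{-n}r: n\ge 0, r\in R\}$ and $D=RX^{-1}=\{ra^{-n}: n\ge 0, r\in R\}$; (2) every nonzero left ideal and every nonzero right ideal of $R$ contains a power of $a$; in particular $u.\dim({}_RR)=u.\dim(R_R)=1$ and $R$ is an Ore domain whose division ring of quotients is $D$; (3) every nonzero prime ideal of $R$ contains $a$; (4) $a\in J(R)$; (5) $R$ is a non-simple $G$-domain; (6) for every $\lambda\in N(R)$, either $\lambda\in R$ or $\lambda^{-1}\in R$.
   Context: All rings are associative unital and subrings share the identity. A maximal subring of a ring $T$ is a proper subring maximal under inclusion among proper subrings of $T$. $J(R)$ is the Jacobson radical, $u.\dim$ is uniform (Goldie) dimension. $N(R)=\{x\in D: xR=Rx\}$. A $G$-domain is a domain in which the intersection of all nonzero prime ideals is nonzero. *)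

theory Defs
  imports Main "HOL-Library.Extended_Nat"
begin

text \<open>All notions are relative to a subset R of a division ring (the type 'a),
  with the ring operations inherited from 'a (subrings share the identity).\<close>

definition subring :: "'a::division_ring set \<Rightarrow> bool" where
  "subring S \<longleftrightarrow> 0 \<in> S \<and> 1 \<in> S \<and> (\<forall>x\<in>S. \<forall>y\<in>S. x + y \<in> S \<and> x * y \<in> S) \<and> (\<forall>x\<in>S. - x \<in> S)"

definition maximal_subring :: "'a::division_ring set \<Rightarrow> bool" where
  "maximal_subring R \<longleftrightarrow> subring R \<and> R \<noteq> UNIV \<and>
     (\<forall>S. subring S \<and> R \<subseteq> S \<and> S \<noteq> UNIV \<longrightarrow> S = R)"

definition left_ideal :: "'a::division_ring set \<Rightarrow> 'a set \<Rightarrow> bool" where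
  "left_ideal R I \<longleftrightarrow> I \<subseteq> R \<and> 0 \<in> I \<and> (\<forall>x\<in>I. \<forall>y\<in>I. x + y \<in> I) \<and> (\<forall>x\<in>I. - x \<in> I)
     \<and> (\<forall>r\<in>R. \<forall>x\<in>I. r * x \<in> I)"

definition right_ideal :: "'a::division_ring set \<Rightarrow> 'a set \<Rightarrow> bool" where
  "right_ideal R I \<longleftrightarrow> I \<subseteq> R \<and> 0 \<in> I \<and> (\<forall>x\<in>I. \<forall>y\<in>I. x + y \<in> I) \<and> (\<forall>x\<in>I. - x \<in> I)
     \<and> (\<forall>r\<in>R. \<forall>x\<in>I. x * r \<in> I)"

definition two_sided_ideal :: "'a::division_ring set \<Rightarrow> 'a set \<Rightarrow> bool" where
  "two_sided_ideal R I \<longleftrightarrow> left_ideal R I \<and> right_ideal R I"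

text \<open>Prime ideal: proper two-sided ideal P such that AB \<subseteq> P implies A \<subseteq> P or B \<subseteq> P
  for two-sided ideals A, B (AB \<subseteq> P iff all products lie in P, as P is additively closed).\<close>
definition prime_ideal :: "'a::division_ring set \<Rightarrow> 'a set \<Rightarrow> bool" where
  "prime_ideal R P \<longleftrightarrow> two_sided_ideal R P \<and> P \<noteq> R \<and>
     (\<forall>A B. two_sided_ideal R A \<and> two_sided_ideal R B \<and> (\<forall>x\<in>A. \<forall>y\<in>B. x * y \<in> P)
        \<longrightarrow> A \<subseteq> P \<or> B \<subseteq> P)"

definition maximal_left_ideal :: "'a::division_ring set \<Rightarrow> 'a set \<Rightarrow> bool" where
  "maximal_left_ideal R M \<longleftrightarrow> left_ideal R M \<and> M \<noteq> R \<and>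
     (\<forall>I. left_ideal R I \<and> M \<subseteq> I \<and> I \<noteq> R \<longrightarrow> I = M)"

definition jacobson :: "'a::division_ring set \<Rightarrow> 'a set" where
  "jacobson R = R \<inter> \<Inter> {M. maximal_left_ideal R M}"

definition simple_ring :: "'a::division_ring set \<Rightarrow> bool" where
  "simple_ring R \<longleftrightarrow> R \<noteq> {0} \<and> (\<forall>I. two_sided_ideal R I \<longrightarrow> I = {0} \<or> I = R)"

definition G_domain :: "'a::division_ring set \<Rightarrow> bool" where
  "G_domain R \<longleftrightarrow> R \<noteq> {0} \<and> (\<forall>x\<in>R. \<forall>y\<in>R. x * y = 0 \<longrightarrow> x = 0 \<or> y = 0) \<and>
     R \<inter> \<Inter> {P. prime_ideal R P \<and> P \<noteq> {0}} \<noteq> {0}"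

definition udim_left :: "'a::division_ring set \<Rightarrow> enat" where
  "udim_left R = Sup {enat n | n. \<exists>I :: nat \<Rightarrow> 'a set.
      (\<forall>i<n. left_ideal R (I i) \<and> I i \<noteq> {0}) \<and>
      (\<forall>x. (\<forall>i<n. x i \<in> I i) \<and> (\<Sum>i<n. x i) = 0 \<longrightarrow> (\<forall>i<n. x i = 0))}"

definition udim_right :: "'a::division_ring set \<Rightarrow> enat" where
  "udim_right R = Sup {enat n | n. \<exists>I :: nat \<Rightarrow> 'a set.
      (\<forall>i<n. right_ideal R (I i) \<and> I i \<noteq> {0}) \<and>
      (\<forall>x. (\<forall>i<n. x i \<in> I i) \<and> (\<Sum>i<n. x i) = 0 \<longrightarrow> (\<forall>i<n. x i = 0))}"

definition left_ore_set :: "'a::division_ring set \<Rightarrow> 'a set \<Rightarrow> bool" where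
  "left_ore_set R X \<longleftrightarrow> X \<subseteq> R \<and> 1 \<in> X \<and> (\<forall>s\<in>X. \<forall>t\<in>X. s * t \<in> X) \<and>
     (\<forall>r\<in>R. \<forall>s\<in>X. \<exists>s'\<in>X. \<exists>r'\<in>R. s' * r = r' * s) \<and>
     (\<forall>r\<in>R. \<forall>s\<in>X. r * s = 0 \<longrightarrow> (\<exists>s'\<in>X. s' * r = 0))"

definition right_ore_set :: "'a::division_ring set \<Rightarrow> 'a set \<Rightarrow> bool" where
  "right_ore_set R X \<longleftrightarrow> X \<subseteq> R \<and> 1 \<in> X \<and> (\<forall>s\<in>X. \<forall>t\<in>X. s * t \<in> X) \<and>
     (\<forall>r\<in>R. \<forall>s\<in>X. \<exists>s'\<in>X. \<exists>r'\<in>R. r * s' = s * r') \<and>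
     (\<forall>r\<in>R. \<forall>s\<in>X. s * r = 0 \<longrightarrow> (\<exists>s'\<in>X. r * s' = 0))"

text \<open>R is a (left and right) Ore domain whose (classical) division ring of quotients is
  the ambient division ring D = UNIV: every element of D is s^{-1} r and also r s^{-1}.\<close>
definition ore_domain_with_quotients_D :: "'a::division_ring set \<Rightarrow> bool" where
  "ore_domain_with_quotients_D R \<longleftrightarrow>
     R \<noteq> {0} \<and> (\<forall>x\<in>R. \<forall>y\<in>R. x * y = 0 \<longrightarrow> x = 0 \<or> y = 0) \<and>
     (\<forall>x\<in>R. \<forall>y\<in>R. x \<noteq> 0 \<and> y \<noteq> 0 \<longrightarrow> (\<exists>u\<in>R. \<exists>v\<in>R. u * x = v * y \<and> u * x \<noteq> 0)) \<and>
     (\<forall>x\<in>R. \<forall>y\<in>R. x \<noteq> 0 \<and> y \<noteq> 0 \<longrightarrow> (\<exists>u\<in>R. \<exists>v\<in>R. x * u = y * v \<and> x * u \<noteq> 0)) \<and>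
     (\<forall>d. \<exists>s\<in>R. \<exists>r\<in>R. s \<noteq> 0 \<and> d = inverse s * r) \<and>
     (\<forall>d. \<exists>s\<in>R. \<exists>r\<in>R. s \<noteq> 0 \<and> d = r * inverse s)"

definition normalizer :: "'a::division_ring set \<Rightarrow> 'a set" where
  "normalizer R = {x. (\<lambda>r. x * r) ` R = (\<lambda>r. r * x) ` R}"

end

theory Submission
  imports Defs
begin

lemma subring_pow: "subring R \<Longrightarrow> x \<in> R \<Longrightarrow> x ^ n \<in> R"
  by (induction n) (auto simp: subring_def)

lemma norm_conj:
  fixes x :: "'a::division_ring"
  assumes "x \<in> normalizer R" "x \<noteq> 0" "r \<in> R"
  shows "x * r * inverse x \<in> R" "inverse x * r * x \<in> R"
proof -
  have e: "(\<lambda>r. x*r)`R = (\<lambda>r. r*x)`R" using assms(1) unfolding normalizer_def by blast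
  have "x*r \<in> (\<lambda>r. r*x)`R" using e assms(3) by blast
  then obtain s where s: "s\<in>R" "x*r = s*x" by auto
  then have "x*r*inverse x = s" using assms(2) by (simp add: mult.assoc)
  then show "x * r * inverse x \<in> R" using s by simp
  have "r*x \<in> (\<lambda>r. x*r)`R" using e assms(3) by blast
  then obtain t where t: "t\<in>R" "r*x = x*t" by auto
  have "inverse x * r * x = inverse x * (x * t)" using t by (simp add: mult.assoc)
  also have "\<dots> = t" using assms(2) by (simp add: mult.assoc[symmetric])
  finally have "inverse x * r * x = t" .
  then show "inverse x * r * x \<in> R" using t by simp
qed

lemma norm_conj_pow:
  fixes x :: "'a::division_ring"
  assumes "x \<in> normalizer R" "x \<noteq> 0"
  shows "r \<in> R \<Longrightarrow> x^n * r * inverse (x^n) \<in> R \<and> inverse (x^n) * r * x^n \<in> R"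
proof (induction n arbitrary: r)
  case 0 then show ?case by simp
next
  case (Suc n)
  have nz: "x^n \<noteq> 0" using assms(2) by simp
  have inv: "inverse (x * x^n) = inverse (x^n) * inverse x"
    using nonzero_inverse_mult_distrib[OF assms(2) nz] by simp
  have "x^Suc n * r * inverse (x^Suc n) = x * (x^n * r * inverse (x^n)) * inverse x"
    by (simp add: inv mult.assoc)
  moreover have "inverse (x^Suc n) * r * x^Suc n = inverse (x^n) * (inverse x * r * x) * x^n"
    by (simp add: inv mult.assoc power_commutes)
  ultimately show ?case using Suc norm_conj[OF assms] by simp
qed

lemma inv_cancel_left [simp]:
  fixes x :: "'a::division_ring"
  shows "x \<noteq> 0 \<Longrightarrow> inverse x * (x * y) = y" "x \<noteq> 0 \<Longrightarrow> x * (inverse x * y) = y"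
  by (simp_all add: mult.assoc[symmetric])

lemma inv_pow_add:
  fixes a :: "'a::division_ring"
  assumes "a \<noteq> 0"
  shows "inverse (a^(m+n)) = inverse (a^m) * inverse (a^n)"
proof -
  have "a^(m+n) = a^n * a^m" by (metis add.commute power_add)
  then show ?thesis using assms by (simp add: nonzero_inverse_mult_distrib)
qed


definition pset :: "'a::division_ring set \<Rightarrow> 'a \<Rightarrow> nat \<Rightarrow> 'a set" where
  "pset C y n = {\<Sum>i\<le>n. c i * y^i | c. \<forall>i\<le>n. c i \<in> C}"

lemma psetI: "(\<forall>i\<le>n. c i \<in> C) \<Longrightarrow> (\<Sum>i\<le>n. c i * y^i) \<in> pset C y n"
  unfolding pset_def by blast

lemma pset_mono1:
  assumes "0 \<in> C" "c \<in> C" "i \<le> n"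
  shows "c * y^i \<in> pset C y n"
proof -
  have "(\<Sum>j\<le>n. (if j = i then c else 0) * y^j) = (\<Sum>j\<le>n. if j = i then c * y^j else 0)"
    by (rule sum.cong) auto
  also have "\<dots> = c * y^i" using assms(3) by (simp add: sum.delta)
  finally have "c * y^i = (\<Sum>j\<le>n. (if j = i then c else 0) * y^j)" by simp
  moreover have "\<forall>j\<le>n. (if j = i then c else 0) \<in> C" using assms by auto
  ultimately show ?thesis using psetI[of n "\<lambda>j. if j = i then c else 0" C y] by simp
qed

lemma pset_add:
  assumes "\<And>x y. x \<in> C \<Longrightarrow> y \<in> C \<Longrightarrow> x + y \<in> C" "p \<in> pset C y n" "q \<in> pset C y n"
  shows "p + q \<in> pset C y n"
proof -
  obtain c d where c: "p = (\<Sum>i\<le>n. c i * y^i)" "\<forall>i\<le>n. c i \<in> C"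
    and d: "q = (\<Sum>i\<le>n. d i * y^i)" "\<forall>i\<le>n. d i \<in> C"
    using assms(2,3) unfolding pset_def by blast
  have "p + q = (\<Sum>i\<le>n. (c i + d i) * y^i)" using c d by (simp add: sum.distrib distrib_right)
  moreover have "\<forall>i\<le>n. c i + d i \<in> C" using c d assms(1) by blast
  ultimately show ?thesis using psetI[of n "\<lambda>i. c i + d i" C y] by simp
qed

lemma pset_sum:
  assumes "0 \<in> C" "\<And>x y. x \<in> C \<Longrightarrow> y \<in> C \<Longrightarrow> x + y \<in> C" "finite S" "\<And>s. s \<in> S \<Longrightarrow> f s \<in> pset C y n"
  shows "sum f S \<in> pset C y n"
  using assms(3,4)
proof (induction S rule: finite_induct)
  case empty
  have "0 * y^0 \<in> pset C y n" by (rule pset_mono1[OF assms(1) assms(1)]) simp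
  then show ?case by simp
next
  case (insert x F)
  then show ?case using pset_add[OF assms(2)] by simp
qed

lemma pset_mono:
  assumes "0 \<in> C" "\<And>x y. x \<in> C \<Longrightarrow> y \<in> C \<Longrightarrow> x + y \<in> C" "n \<le> m" "p \<in> pset C y n"
  shows "p \<in> pset C y m"
proof -
  obtain c where c: "p = (\<Sum>i\<le>n. c i * y^i)" "\<forall>i\<le>n. c i \<in> C"
    using assms(4) unfolding pset_def by blast
  have "(\<Sum>i\<le>n. c i * y^i) \<in> pset C y m"
    by (rule pset_sum[OF assms(1,2)]) (use c assms(3) pset_mono1[OF assms(1)] in auto)
  then show ?thesis using c by simp
qed

context
  fixes R I :: "'a::division_ring set"
  assumes I0: "0 \<in> I" and Iadd: "\<And>x y. x \<in> I \<Longrightarrow> y \<in> I \<Longrightarrow> x + y \<in> I"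
    and Imul: "\<And>r m. r \<in> R \<Longrightarrow> m \<in> I \<Longrightarrow> r * m \<in> I"
    and IR: "I \<subseteq> R" and Rmul: "\<And>x y. x \<in> R \<Longrightarrow> y \<in> R \<Longrightarrow> x * y \<in> R"
    and Iunit: "\<And>m. m \<in> I \<Longrightarrow> \<exists>v\<in>R. v * (1 - m) = 1"
begin

lemma pbase: "1 \<in> pset I y 0 \<Longrightarrow> False"
proof -
  assume "1 \<in> pset I y 0"
  then obtain c where "1 = (\<Sum>i\<le>0. c i * y^i)" "c 0 \<in> I" unfolding pset_def by auto
  then have "1 \<in> I" by simp
  then obtain v where "v * (1 - 1) = (1::'a)" using Iunit by blast
  then show False by simp
qed

lemma pred:
  assumes y: "y \<noteq> 0" and kn: "Suc k \<le> Suc n"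
    and P1: "1 \<in> pset I y (Suc n)" and P2: "1 \<in> pset I (inverse y) (Suc k)"
  shows "1 \<in> pset I y n"
proof -
  obtain c where c: "1 = (\<Sum>i\<le>Suc n. c i * y^i)" "\<forall>i\<le>Suc n. c i \<in> I"
    using P1 unfolding pset_def by blast
  obtain d where d: "1 = (\<Sum>j\<le>Suc k. d j * inverse y^j)" "\<forall>j\<le>Suc k. d j \<in> I"
    using P2 unfolding pset_def by blast
  have "1 = d 0 * inverse y ^ 0 + (\<Sum>j\<le>k. d (Suc j) * inverse y ^ Suc j)"
    using d(1) by (simp only: sum.atMost_Suc_shift)
  then have "1 = d 0 + (\<Sum>j\<le>k. d (Suc j) * inverse y ^ Suc j)" by (simp only: power_0 mult_1_right)
  then have u: "1 - d 0 = (\<Sum>j\<le>k. d (Suc j) * inverse y ^ Suc j)" by (simp add: algebra_simps)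
  obtain v where v: "v \<in> R" "v * (1 - d 0) = 1" using Iunit d(2) by blast
  have pw: "inverse y ^ Suc j * y ^ Suc n = y ^ (n - j)" if "j \<le> k" for j
  proof -
    have "Suc n = Suc j + (n - j)" using that kn by simp
    then have "y ^ Suc n = y ^ Suc j * y ^ (n - j)" by (metis power_add)
    then show ?thesis using y by (simp add: power_inverse del: power_Suc)
  qed
  have "c (Suc n) * y ^ Suc n = c (Suc n) * (v * (1 - d 0)) * y ^ Suc n" using v by simp
  also have "\<dots> = c (Suc n) * v * (\<Sum>j\<le>k. d (Suc j) * inverse y ^ Suc j * y ^ Suc n)"
    unfolding u by (simp add: mult.assoc sum_distrib_right)
  also have "\<dots> = (\<Sum>j\<le>k. c (Suc n) * v * (d (Suc j) * (inverse y ^ Suc j * y ^ Suc n)))"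
    by (simp only: sum_distrib_left mult.assoc)
  also have "\<dots> = (\<Sum>j\<le>k. (c (Suc n) * v * d (Suc j)) * y ^ (n - j))"
    by (rule sum.cong[OF refl]) (simp add: pw mult.assoc del: power_Suc)
  finally have e: "c (Suc n) * y ^ Suc n = (\<Sum>j\<le>k. (c (Suc n) * v * d (Suc j)) * y ^ (n - j))" .
  have T2: "c (Suc n) * y ^ Suc n \<in> pset I y n"
    unfolding e
  proof (rule pset_sum[OF I0 Iadd])
    show "finite {..k}" by simp
    fix j assume j: "j \<in> {..k}"
    have "c (Suc n) * v \<in> R" using Rmul c(2) IR v(1) by blast
    then have "c (Suc n) * v * d (Suc j) \<in> I" using Imul d(2) j by simp
    then show "c (Suc n) * v * d (Suc j) * y ^ (n - j) \<in> pset I y n"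
      by (rule pset_mono1[OF I0]) simp
  qed
  have T1: "(\<Sum>i\<le>n. c i * y^i) \<in> pset I y n" using c(2) by (intro psetI) simp
  have "(\<Sum>i\<le>n. c i * y^i) + c (Suc n) * y ^ Suc n \<in> pset I y n"
    by (rule pset_add[OF Iadd T1 T2])
  then show ?thesis using c(1) by simp
qed

lemma pmain: "y \<noteq> 0 \<Longrightarrow> 1 \<in> pset I y n \<Longrightarrow> 1 \<in> pset I (inverse y) k \<Longrightarrow> False"
proof (induction "n + k" arbitrary: y n k rule: less_induct)
  case less
  show False
  proof (cases "n = 0 \<or> k = 0")
    case True
    then show False using pbase less.prems by blast
  next
    case False
    then obtain n' k' where nk: "n = Suc n'" "k = Suc k'" by (metis not0_implies_Suc)
    show False
    proof (cases "k \<le> n")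
      case True
      have "1 \<in> pset I y n'" using pred[of y k' n'] less.prems nk True by simp
      then show False using less.hyps[of n' k y] less.prems nk by simp
    next
      case False
      have iy: "inverse y \<noteq> 0" using less.prems by simp
      have "1 \<in> pset I (inverse y) k'" using pred[OF iy, of n' k'] less.prems nk False by simp
      then show False using less.hyps[of n k' y] less.prems nk by simp
    qed
  qed
qed

end

context
  fixes R :: "'a::division_ring set" and a :: 'a
  assumes maxR: "maximal_subring R" and aR: "a \<in> R" and a_nz: "a \<noteq> 0"
    and a_nonunit: "\<not> (\<exists>b\<in>R. a * b = 1 \<and> b * a = 1)"
    and a_normal: "(\<lambda>r. a * r) ` R = (\<lambda>r. r * a) ` R"
begin

lemma sR: "subring R" using maxR by (simp add: maximal_subring_def)

lemma sR0: "0 \<in> R" and sR1: "1 \<in> R" and sRadd: "x \<in> R \<Longrightarrow> y \<in> R \<Longrightarrow> x + y \<in> R"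
  and sRmul: "x \<in> R \<Longrightarrow> y \<in> R \<Longrightarrow> x * y \<in> R" and sRneg: "x \<in> R \<Longrightarrow> - x \<in> R"
  using sR by (auto simp: subring_def)

lemma sRdiff: "x \<in> R \<Longrightarrow> y \<in> R \<Longrightarrow> x - y \<in> R"
  using sRadd sRneg by (metis diff_conv_add_uminus)

lemma apowR: "a ^ n \<in> R" using subring_pow[OF sR aR] .

lemma a_norm: "a \<in> normalizer R" using a_normal by (simp add: normalizer_def)

lemma conjR: "r \<in> R \<Longrightarrow> a^n * r * inverse (a^n) \<in> R"
  using norm_conj_pow[OF a_norm a_nz] by blast
lemma conjL: "r \<in> R \<Longrightarrow> inverse (a^n) * r * a^n \<in> R"
  using norm_conj_pow[OF a_norm a_nz] by blast

lemma apow_nz: "a ^ n \<noteq> 0" using a_nz by simp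

lemma invnotin: "inverse a \<notin> R"
  using a_nonunit a_nz by auto

lemma ra_ne1: "r \<in> R \<Longrightarrow> r * a \<noteq> 1"
proof
  assume "r \<in> R" "r * a = 1"
  have "r = r * a * inverse a" using a_nz by (simp add: mult.assoc)
  then have "r = inverse a" using \<open>r * a = 1\<close> by simp
  then show False using invnotin \<open>r \<in> R\<close> by simp
qed

definition "TT = {inverse (a ^ n) * r | n r. r \<in> R}"

lemma TT_sub: "subring TT"
  unfolding subring_def
proof (intro conjI ballI)
  have "(0::'a) = inverse (a^0) * 0" "(1::'a) = inverse (a^0) * 1" by simp_all
  then show "0 \<in> TT" "1 \<in> TT" unfolding TT_def using sR0 sR1 by blast+
  fix x y assume "x \<in> TT" "y \<in> TT"
  then obtain n r m s where x: "x = inverse (a^n) * r" "r \<in> R" and y: "y = inverse (a^m) * s" "s \<in> R"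
    unfolding TT_def by blast
  have i1: "inverse (a^(n+m)) = inverse (a^n) * inverse (a^m)" by (rule inv_pow_add[OF a_nz])
  have i2: "inverse (a^(n+m)) = inverse (a^m) * inverse (a^n)" by (metis add.commute inv_pow_add[OF a_nz])
  have "x + y = inverse (a^(n+m)) * (a^m * r + a^n * s)"
  proof -
    have "inverse (a^(n+m)) * (a^m * r) = inverse (a^n) * r"
      unfolding i1 using a_nz by (simp add: mult.assoc)
    moreover have "inverse (a^(n+m)) * (a^n * s) = inverse (a^m) * s"
      unfolding i2 using a_nz by (simp add: mult.assoc)
    ultimately show ?thesis using x y by (simp add: distrib_left)
  qed
  moreover have "a^m * r + a^n * s \<in> R" using x y apowR sRadd sRmul by blast
  ultimately show "x + y \<in> TT" unfolding TT_def by blast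
  have "x * y = inverse (a^(n+m)) * ((a^m * r * inverse (a^m)) * s)"
  proof -
    have "inverse (a^(n+m)) * ((a^m * r * inverse (a^m)) * s)
        = inverse (a^n) * (inverse (a^m) * a^m) * r * inverse (a^m) * s"
      unfolding i1 by (simp add: mult.assoc)
    also have "\<dots> = x * y" using x y apow_nz by (simp add: mult.assoc)
    finally show ?thesis by simp
  qed
  moreover have "(a^m * r * inverse (a^m)) * s \<in> R" using conjR x y sRmul by blast
  ultimately show "x * y \<in> TT" unfolding TT_def by blast
next
  fix x assume "x \<in> TT"
  then obtain n r where x: "x = inverse (a^n) * r" "r \<in> R" unfolding TT_def by blast
  then have "- x = inverse (a^n) * (- r)" by simp
  then show "- x \<in> TT" unfolding TT_def using sRneg x(2) by blast
qed

lemma TT_univ: "{inverse (a ^ n) * r | n r. r \<in> R} = UNIV"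
proof -
  have "R \<subseteq> TT" unfolding TT_def by (force intro: exI[of _ 0])
  moreover have "inverse a \<in> TT" unfolding TT_def using sR1 by (force intro!: exI[of _ 1])
  ultimately have "TT \<noteq> R" "R \<subseteq> TT" using invnotin by auto
  then have "TT = UNIV" using maxR TT_sub unfolding maximal_subring_def by blast
  then show ?thesis unfolding TT_def .
qed

lemma TT2_univ: "{r * inverse (a ^ n) | n r. r \<in> R} = UNIV"
proof -
  have "\<exists>n r. d = r * inverse (a ^ n) \<and> r \<in> R" for d :: 'a
  proof -
  obtain n r where d: "d = inverse (a^n) * r" "r \<in> R" using TT_univ by blast
  have "d = (inverse (a^n) * r * a^n) * inverse (a^n)"
    using d apow_nz by (simp add: mult.assoc)
  then show "\<exists>n r. d = r * inverse (a ^ n) \<and> r \<in> R" using conjL[OF d(2)] by blast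
  qed
  then show ?thesis by blast
qed


lemma ore_left: "left_ore_set R (range (\<lambda>n. a ^ n))"
proof -
  have "\<exists>s'\<in>range (\<lambda>n. a ^ n). \<exists>r'\<in>R. s' * r = r' * s" if H: "r \<in> R" "s \<in> range (\<lambda>n. a ^ n)" for r s
  proof -
    obtain k where s: "s = a^k" using H(2) by blast
    have "a^k * r = (a^k * r * inverse (a^k)) * s" using s a_nz by (simp add: mult.assoc)
    then show ?thesis using conjR[OF H(1)] s by blast
  qed
  moreover have "\<exists>s'\<in>range (\<lambda>n. a ^ n). s' * r = 0" if "r * s = 0" "s \<in> range (\<lambda>n. a ^ n)" for r s
  proof -
    have "s \<noteq> 0" using that(2) a_nz by auto
    then have "r = 0" using that(1) by simp
    then show ?thesis by (metis mult_zero_right rangeI)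
  qed
  moreover have "range (\<lambda>n. a ^ n) \<subseteq> R" using apowR by auto
  moreover have "1 \<in> range (\<lambda>n. a ^ n)" by (metis power_0 rangeI)
  moreover have "s * t \<in> range (\<lambda>n. a ^ n)" if "s \<in> range (\<lambda>n. a ^ n)" "t \<in> range (\<lambda>n. a ^ n)" for s t
    using that by (auto simp: power_add[symmetric])
  ultimately show ?thesis unfolding left_ore_set_def by blast
qed

lemma ore_right: "right_ore_set R (range (\<lambda>n. a ^ n))"
proof -
  have "\<exists>s'\<in>range (\<lambda>n. a ^ n). \<exists>r'\<in>R. r * s' = s * r'" if H: "r \<in> R" "s \<in> range (\<lambda>n. a ^ n)" for r s
  proof -
    obtain k where s: "s = a^k" using H(2) by blast
    have "r * a^k = s * (inverse (a^k) * r * a^k)" using s a_nz by (simp add: mult.assoc)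
    then show ?thesis using conjL[OF H(1)] s by blast
  qed
  moreover have "\<exists>s'\<in>range (\<lambda>n. a ^ n). r * s' = 0" if "s * r = 0" "s \<in> range (\<lambda>n. a ^ n)" for r s
  proof -
    have "s \<noteq> 0" using that(2) a_nz by auto
    then have "r = 0" using that(1) by simp
    then show ?thesis by (metis mult_zero_left rangeI)
  qed
  moreover have "range (\<lambda>n. a ^ n) \<subseteq> R" using apowR by auto
  moreover have "1 \<in> range (\<lambda>n. a ^ n)" by (metis power_0 rangeI)
  moreover have "s * t \<in> range (\<lambda>n. a ^ n)" if "s \<in> range (\<lambda>n. a ^ n)" "t \<in> range (\<lambda>n. a ^ n)" for s t
    using that by (auto simp: power_add[symmetric])
  ultimately show ?thesis unfolding right_ore_set_def by blast
qed

lemma left_mult_pow: "x \<noteq> 0 \<Longrightarrow> \<exists>n r. r \<in> R \<and> r * x = a^n"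
proof -
  assume x: "x \<noteq> 0"
  obtain n r where d: "inverse x = inverse (a^n) * r" "r \<in> R" using TT_univ by blast
  then have "a^n * inverse x = r" using a_nz by simp
  then have "r * x = a^n" using x by (metis mult.assoc left_inverse mult_1_right)
  then show ?thesis using d by blast
qed

lemma right_mult_pow: "x \<noteq> 0 \<Longrightarrow> \<exists>n r. r \<in> R \<and> x * r = a^n"
proof -
  assume x: "x \<noteq> 0"
  obtain n r where d: "inverse x = r * inverse (a^n)" "r \<in> R" using TT2_univ by blast
  then have "inverse x * a^n = r" using a_nz by (simp add: mult.assoc)
  then have "x * r = a^n" using x by (metis inv_cancel_left(2))
  then show ?thesis using d by blast
qed

lemma left_ideal_pow: "left_ideal R I \<Longrightarrow> I \<noteq> {0} \<Longrightarrow> \<exists>n. \<forall>m\<ge>n. a^m \<in> I"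
proof -
  assume I: "left_ideal R I" "I \<noteq> {0}"
  then obtain x where x: "x \<in> I" "x \<noteq> 0" unfolding left_ideal_def by blast
  obtain n r where r: "r \<in> R" "r * x = a^n" using left_mult_pow[OF x(2)] by blast
  have "a^m \<in> I" if "m \<ge> n" for m
  proof -
    have "a^m = (a^(m-n) * r) * x" using r that by (simp add: mult.assoc power_add[symmetric])
    moreover have "\<forall>r\<in>R. \<forall>x\<in>I. r * x \<in> I" using I(1) unfolding left_ideal_def by blast
    ultimately show ?thesis using sRmul[OF apowR r(1)] x(1) by simp
  qed
  then show ?thesis by blast
qed

lemma right_ideal_pow: "right_ideal R I \<Longrightarrow> I \<noteq> {0} \<Longrightarrow> \<exists>n. \<forall>m\<ge>n. a^m \<in> I"
proof -
  assume I: "right_ideal R I" "I \<noteq> {0}"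
  then obtain x where x: "x \<in> I" "x \<noteq> 0" unfolding right_ideal_def by blast
  obtain n r where r: "r \<in> R" "x * r = a^n" using right_mult_pow[OF x(2)] by blast
  have "a^m \<in> I" if "m \<ge> n" for m
  proof -
    have "a^m = x * (r * a^(m-n))" using r that by (simp add: mult.assoc[symmetric] power_add[symmetric])
    moreover have "\<forall>r\<in>R. \<forall>x\<in>I. x * r \<in> I" using I(1) unfolding right_ideal_def by blast
    ultimately show ?thesis using sRmul[OF r(1) apowR] x(1) by simp
  qed
  then show ?thesis by blast
qed

lemma udim_generic:
  fixes P :: "'a set \<Rightarrow> bool"
  assumes big: "\<And>I. P I \<Longrightarrow> I \<noteq> {0} \<Longrightarrow> \<exists>n. \<forall>m\<ge>n. a^m \<in> I"
    and zero: "\<And>I. P I \<Longrightarrow> 0 \<in> I" and neg: "\<And>I y. P I \<Longrightarrow> y \<in> I \<Longrightarrow> - y \<in> I"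
    and PR: "P R"
  shows "Sup {enat n | n. \<exists>I :: nat \<Rightarrow> 'a set. (\<forall>i<n. P (I i) \<and> I i \<noteq> {0}) \<and>
      (\<forall>x. (\<forall>i<n. x i \<in> I i) \<and> (\<Sum>i<n. x i) = 0 \<longrightarrow> (\<forall>i<n. x i = 0))} = 1"
    (is "Sup ?S = 1")
proof -
  have le: "n \<le> 1" if H: "\<exists>I :: nat \<Rightarrow> 'a set. (\<forall>i<n. P (I i) \<and> I i \<noteq> {0}) \<and>
      (\<forall>x. (\<forall>i<n. x i \<in> I i) \<and> (\<Sum>i<n. x i) = 0 \<longrightarrow> (\<forall>i<n. x i = 0))" for n
  proof (rule ccontr)
    assume "\<not> n \<le> 1"
    then have n: "0 < n" "1 < n" by auto
    obtain I :: "nat \<Rightarrow> 'a set" where I: "\<forall>i<n. P (I i) \<and> I i \<noteq> {0}"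
      "\<forall>x. (\<forall>i<n. x i \<in> I i) \<and> (\<Sum>i<n. x i) = 0 \<longrightarrow> (\<forall>i<n. x i = 0)" using H by (elim exE conjE) (rule that)
    have P0: "P (I 0)" "I 0 \<noteq> {0}" using I(1) n(1) by simp_all
    have P1: "P (I 1)" "I 1 \<noteq> {0}" using I(1) n(2) by simp_all
    obtain n0 where n0: "\<forall>m\<ge>n0. a^m \<in> I 0" using big[OF P0] by (elim exE)
    obtain n1 where n1: "\<forall>m\<ge>n1. a^m \<in> I 1" using big[OF P1] by (elim exE)
    define c where "c = a^(n0+n1)"
    have c0: "c \<in> I 0" "c \<in> I 1" using n0 n1 c_def by auto
    define x where "x = (\<lambda>i::nat. (if i = 0 then c else 0) + (if i = 1 then - c else 0))"
    have "\<forall>i<n. x i \<in> I i"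
    proof (intro allI impI)
      fix i assume "i < n"
      have "P (I i)" using I(1) \<open>i < n\<close> by blast
      then show "x i \<in> I i" using c0 zero[of "I i"] neg[of "I 1" c] I(1) n unfolding x_def by (cases "i = 0"; cases "i = 1") auto
    qed
    moreover have "(\<Sum>i<n. x i) = 0"
    proof -
      have "(\<Sum>i<n. x i) = (\<Sum>i<n. if i = 0 then c else 0) + (\<Sum>i<n. if i = 1 then - c else 0)"
        unfolding x_def by (rule sum.distrib)
      also have "\<dots> = c + - c" using n by (simp only: sum.delta finite_lessThan lessThan_iff if_True)
      finally show ?thesis by simp
    qed
    ultimately have "\<forall>i<n. x i = 0" using I(2) by simp
    then have "x 0 = 0" using n by blast
    then have "c = 0" unfolding x_def by simp
    then show False unfolding c_def using a_nz by simp
  qed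
  have "1 \<in> ?S"
  proof -
    have "R \<noteq> {0}" using sR1 by auto
    then have E: "\<exists>I :: nat \<Rightarrow> 'a set. (\<forall>i<1. P (I i) \<and> I i \<noteq> {0}) \<and>
      (\<forall>x. (\<forall>i<1. x i \<in> I i) \<and> (\<Sum>i<1. x i) = 0 \<longrightarrow> (\<forall>i<1. x i = 0))"
      using PR by (intro exI[of _ "\<lambda>_. R"] conjI allI impI) simp_all
    have "enat 1 \<in> ?S" using E by (intro CollectI exI[of _ 1] conjI refl)
    then show ?thesis by (simp add: one_enat_def)
  qed
  moreover have "y \<le> 1" if Y: "y \<in> ?S" for y
  proof -
    obtain n where N: "y = enat n \<and> (\<exists>I :: nat \<Rightarrow> 'a set. (\<forall>i<n. P (I i) \<and> I i \<noteq> {0}) \<and>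
      (\<forall>x. (\<forall>i<n. x i \<in> I i) \<and> (\<Sum>i<n. x i) = 0 \<longrightarrow> (\<forall>i<n. x i = 0)))" using Y unfolding mem_Collect_eq by (rule exE)
    then have "n \<le> 1" using le by (rule conjE)
    then show ?thesis using N by (simp add: one_enat_def)
  qed
  ultimately show ?thesis by (meson Sup_least Sup_upper order_antisym)
qed

lemma udim_l: "udim_left R = 1"
  unfolding udim_left_def
proof (rule udim_generic[of "left_ideal R"])
  show "\<And>I. left_ideal R I \<Longrightarrow> I \<noteq> {0} \<Longrightarrow> \<exists>n. \<forall>m\<ge>n. a ^ m \<in> I" by (rule left_ideal_pow)
  show "\<And>I. left_ideal R I \<Longrightarrow> 0 \<in> I" unfolding left_ideal_def by blast
  show "\<And>I y. left_ideal R I \<Longrightarrow> y \<in> I \<Longrightarrow> - y \<in> I" unfolding left_ideal_def by blast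
  show "left_ideal R R" unfolding left_ideal_def using sR0 sRadd sRneg sRmul by blast
qed

lemma udim_r: "udim_right R = 1"
  unfolding udim_right_def
proof (rule udim_generic[of "right_ideal R"])
  show "\<And>I. right_ideal R I \<Longrightarrow> I \<noteq> {0} \<Longrightarrow> \<exists>n. \<forall>m\<ge>n. a ^ m \<in> I" by (rule right_ideal_pow)
  show "\<And>I. right_ideal R I \<Longrightarrow> 0 \<in> I" unfolding right_ideal_def by blast
  show "\<And>I y. right_ideal R I \<Longrightarrow> y \<in> I \<Longrightarrow> - y \<in> I" unfolding right_ideal_def by blast
  show "right_ideal R R" unfolding right_ideal_def using sR0 sRadd sRneg sRmul by blast
qed

lemma ore_dom: "ore_domain_with_quotients_D R"
  unfolding ore_domain_with_quotients_D_def
proof (intro conjI ballI allI impI)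
  show "R \<noteq> {0}" using sR1 by auto
  fix x y assume "x \<in> R" "y \<in> R"
  { assume "x * y = 0" then show "x = 0 \<or> y = 0" by simp }
  { assume xy: "x \<noteq> 0 \<and> y \<noteq> 0"
    obtain n r where r: "r \<in> R" "r * x = a^n" using left_mult_pow xy by blast
    obtain m s where s: "s \<in> R" "s * y = a^m" using left_mult_pow xy by blast
    have "(a^m * r) * x = (a^n * s) * y" using r s by (simp add: mult.assoc power_add[symmetric] add.commute)
    moreover have "(a^m * r) * x \<noteq> 0" using r a_nz by (simp add: mult.assoc)
    ultimately show "\<exists>u\<in>R. \<exists>v\<in>R. u * x = v * y \<and> u * x \<noteq> 0" using r s apowR sRmul by blast }
  { assume xy: "x \<noteq> 0 \<and> y \<noteq> 0"
    obtain n r where r: "r \<in> R" "x * r = a^n" using right_mult_pow xy by blast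
    obtain m s where s: "s \<in> R" "y * s = a^m" using right_mult_pow xy by blast
    have "x * (r * a^m) = y * (s * a^n)" using r s by (simp add: mult.assoc[symmetric] power_add[symmetric] add.commute)
    moreover have "x * (r * a^m) \<noteq> 0" using r a_nz by (simp add: mult.assoc[symmetric])
    ultimately show "\<exists>u\<in>R. \<exists>v\<in>R. x * u = y * v \<and> x * u \<noteq> 0" using r s apowR sRmul by blast }
next
  fix d :: 'a
  obtain n r where "d = inverse (a^n) * r" "r \<in> R" using TT_univ by blast
  then show "\<exists>s\<in>R. \<exists>r\<in>R. s \<noteq> 0 \<and> d = inverse s * r" using apowR[of n] apow_nz[of n] by blast
next
  fix d :: 'a
  obtain n r where "d = r * inverse (a^n)" "r \<in> R" using TT2_univ by blast
  then show "\<exists>s\<in>R. \<exists>r\<in>R. s \<noteq> 0 \<and> d = r * inverse s" using apowR[of n] apow_nz[of n] by blast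
qed


lemma ideal_pow: "two_sided_ideal R {r * a^n | r. r \<in> R}"
  unfolding two_sided_ideal_def left_ideal_def right_ideal_def
proof (intro conjI ballI subsetI)
  let ?I = "{r * a^n | r. r \<in> R}"
  show "x \<in> R" if "x \<in> ?I" for x using that apowR sRmul by blast
  show "x \<in> R" if "x \<in> ?I" for x using that apowR sRmul by blast
  have "(0::'a) = 0 * a^n" by simp
  then show "0 \<in> ?I" "0 \<in> ?I" using sR0 by blast+
  fix x assume "x \<in> ?I"
  then obtain r where x: "r \<in> R" "x = r * a^n" by blast
  have "- x = (- r) * a^n" using x by simp
  then show "- x \<in> ?I" "- x \<in> ?I" using sRneg[OF x(1)] by blast+
  {
    fix y assume "y \<in> ?I"
    then obtain s where y: "s \<in> R" "y = s * a^n" by blast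
    have "x + y = (r + s) * a^n" using x y by (simp add: distrib_right)
    then show "x + y \<in> ?I" "x + y \<in> ?I" using sRadd[OF x(1) y(1)] by blast+
  }
  fix t assume t: "t \<in> R"
  have "t * x = (t * r) * a^n" using x by (simp add: mult.assoc)
  then show "t * x \<in> ?I" using sRmul[OF t x(1)] by blast
  have "x * t = (r * (a^n * t * inverse (a^n))) * a^n" using x a_nz by (simp add: mult.assoc)
  then show "x * t \<in> ?I" using sRmul[OF x(1) conjR[OF t]] by blast
qed

lemma prime_contains_a:
  assumes P: "prime_ideal R P" "P \<noteq> {0}"
  shows "a \<in> P"
proof -
  have PL: "left_ideal R P" using P(1) unfolding prime_ideal_def two_sided_ideal_def by blast
  have PR: "P \<noteq> R" using P(1) unfolding prime_ideal_def by blast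
  have Pmul: "\<forall>r\<in>R. \<forall>x\<in>P. r * x \<in> P" and PsubR: "P \<subseteq> R" using PL unfolding left_ideal_def by blast+
  have Pprime: "\<And>A B. two_sided_ideal R A \<Longrightarrow> two_sided_ideal R B \<Longrightarrow> (\<forall>x\<in>A. \<forall>y\<in>B. x * y \<in> P) \<Longrightarrow> A \<subseteq> P \<or> B \<subseteq> P"
    using P(1) unfolding prime_ideal_def by blast
  obtain n where n: "a^n \<in> P" using left_ideal_pow[OF PL P(2)] by blast
  have "a^n \<in> P \<Longrightarrow> a \<in> P" for n
  proof (induction n)
    case 0
    then have "1 \<in> P" by simp
    then have "R \<subseteq> P" using Pmul by (metis mult_1_right subsetI)
    then show ?case using PR PsubR by blast
  next
    case (Suc n)
    have "\<forall>x\<in>{r * a^1 | r. r \<in> R}. \<forall>y\<in>{r * a^n | r. r \<in> R}. x * y \<in> P"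
    proof (intro ballI)
      fix x y assume "x \<in> {r * a^1 | r. r \<in> R}" "y \<in> {r * a^n | r. r \<in> R}"
      then obtain r s where rs: "r \<in> R" "s \<in> R" "x = r * a" "y = s * a^n" by auto
      have "x * y = (r * (a^1 * s * inverse (a^1))) * a^Suc n" using rs a_nz by (simp add: mult.assoc)
      moreover have "r * (a^1 * s * inverse (a^1)) \<in> R" using sRmul[OF rs(1) conjR[OF rs(2)]] .
      ultimately show "x * y \<in> P" using Pmul Suc.prems by simp
    qed
    then have "{r * a^1 | r. r \<in> R} \<subseteq> P \<or> {r * a^n | r. r \<in> R} \<subseteq> P"
      using Pprime[OF ideal_pow ideal_pow] by blast
    moreover have "a \<in> {r * a^1 | r. r \<in> R}" "a^n \<in> {r * a^n | r. r \<in> R}"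
      using sR1 by (metis (mono_tags, lifting) mem_Collect_eq mult_1_left power_one_right)+
    ultimately show ?case using Suc.IH by blast
  qed
  then show ?thesis using n .
qed

lemma unit_1ma: assumes r: "r \<in> R" shows "\<exists>v\<in>R. v * (1 - r * a) = 1"
proof -
  define u where "u = 1 - r * a"
  have u0: "u \<noteq> 0" using ra_ne1[OF r] unfolding u_def by simp
  have "\<And>s. s \<in> R \<Longrightarrow> inverse u = inverse (a^n) * s \<Longrightarrow> inverse u \<in> R" for n
  proof (induction n)
    case 0 then show ?case by simp
  next
    case (Suc n)
    have "a^Suc n * inverse u = s" using Suc.prems a_nz by simp
    then have "s * u = a^Suc n" using u0 by (metis mult.assoc left_inverse mult_1_right)
    moreover have "s * u = s - s * r * a" unfolding u_def by (simp add: algebra_simps)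
    ultimately have "s = a^Suc n + s * r * a" by (simp add: algebra_simps)
    then have "s = (a^n + s * r) * a" by (simp only: power_Suc2 distrib_right)
    define t where "t = a^n + s * r"
    have tR: "t \<in> R" unfolding t_def using sRadd[OF apowR sRmul[OF Suc.prems(1) r]] .
    have "inverse (a^Suc n) = inverse (a^n) * inverse a"
      using nonzero_inverse_mult_distrib[of a "a^n"] a_nz by simp
    then have "inverse u = inverse (a^n) * (inverse (a^1) * t * a^1)"
      using Suc.prems(2) \<open>s = (a^n + s * r) * a\<close> t_def by (simp add: mult.assoc)
    then show ?case using Suc.IH conjL[OF tR] by blast
  qed
  moreover obtain n s where "inverse u = inverse (a^n) * s" "s \<in> R" using TT_univ by blast
  ultimately have "inverse u \<in> R" by blast
  moreover have "inverse u * u = 1" using u0 by simp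
  ultimately show ?thesis unfolding u_def by blast
qed

lemma a_jac: "a \<in> jacobson R"
  unfolding jacobson_def
proof (intro IntI InterI aR)
  fix M assume "M \<in> {M. maximal_left_ideal R M}"
  then have M: "left_ideal R M" "M \<noteq> R" "\<And>I. left_ideal R I \<Longrightarrow> M \<subseteq> I \<Longrightarrow> I \<noteq> R \<Longrightarrow> I = M"
    unfolding maximal_left_ideal_def by blast+
  have MR: "M \<subseteq> R" and M0: "0 \<in> M" and Madd: "\<And>x y. x \<in> M \<Longrightarrow> y \<in> M \<Longrightarrow> x + y \<in> M"
    and Mneg: "\<And>x. x \<in> M \<Longrightarrow> - x \<in> M" and Mmul: "\<And>r x. r \<in> R \<Longrightarrow> x \<in> M \<Longrightarrow> r * x \<in> M"
    using M(1) unfolding left_ideal_def by blast+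
  show "a \<in> M"
  proof (rule ccontr)
    assume aM: "a \<notin> M"
    define K where "K = {m + r * a | m r. m \<in> M \<and> r \<in> R}"
    have "left_ideal R K"
      unfolding left_ideal_def
    proof (intro conjI ballI subsetI)
      show "x \<in> R" if "x \<in> K" for x using that MR sRadd sRmul aR unfolding K_def by blast
      have "(0::'a) = 0 + 0 * a" by simp
      then show "0 \<in> K" unfolding K_def using M0 sR0 by blast
      fix x assume "x \<in> K"
      then obtain m r where x: "m \<in> M" "r \<in> R" "x = m + r * a" unfolding K_def by blast
      have "- x = (- m) + (- r) * a" using x by simp
      then show "- x \<in> K" unfolding K_def using Mneg[OF x(1)] sRneg[OF x(2)] by blast
      {
        fix y assume "y \<in> K"
        then obtain m' r' where y: "m' \<in> M" "r' \<in> R" "y = m' + r' * a" unfolding K_def by blast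
        have "x + y = (m + m') + (r + r') * a" using x y by (simp add: algebra_simps)
        then show "x + y \<in> K" unfolding K_def using Madd[OF x(1) y(1)] sRadd[OF x(2) y(2)] by blast
      }
      fix t assume t: "t \<in> R"
      have "t * x = t * m + (t * r) * a" using x by (simp add: algebra_simps)
      then show "t * x \<in> K" unfolding K_def using Mmul[OF t x(1)] sRmul[OF t x(2)] by blast
    qed
    moreover have "M \<subseteq> K"
    proof
      fix m assume "m \<in> M"
      moreover have "m = m + 0 * a" by simp
      ultimately show "m \<in> K" unfolding K_def using sR0 by blast
    qed
    moreover have "a \<in> K"
    proof -
      have "a = 0 + 1 * a" by simp
      then show ?thesis unfolding K_def using M0 sR1 by blast
    qed
    ultimately have "K = R" using M(3) aM by blast
    then have "1 \<in> K" using sR1 by simp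
    then obtain m r where mr: "m \<in> M" "r \<in> R" "1 = m + r * a" unfolding K_def by blast
    then have "m = 1 - r * a" by (simp add: algebra_simps)
    then obtain v where v: "v \<in> R" "v * m = 1" using unit_1ma[OF mr(2)] by blast
    then have "1 \<in> M" using Mmul[OF v(1) mr(1)] by simp
    then have "R \<subseteq> M" using Mmul by (metis mult_1_right subsetI)
    then show False using M(2) MR by blast
  qed
qed

lemma not_simple: "\<not> simple_ring R"
proof -
  let ?I = "{r * a^1 | r. r \<in> R}"
  have "a \<in> ?I" using sR1 by (metis (mono_tags, lifting) mem_Collect_eq mult_1_left power_one_right)
  then have "?I \<noteq> {0}" using a_nz by blast
  moreover have "1 \<notin> ?I" using ra_ne1 by auto
  then have "?I \<noteq> R" using sR1 by blast
  ultimately show ?thesis using ideal_pow[of 1] unfolding simple_ring_def by blast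
qed

lemma gdom: "G_domain R"
  unfolding G_domain_def
proof (intro conjI ballI impI)
  show "R \<noteq> {0}" using sR1 by auto
  show "x = 0 \<or> y = 0" if "x * y = 0" for x y :: 'a using that by simp
  have "a \<in> R \<inter> \<Inter> {P. prime_ideal R P \<and> P \<noteq> {0}}" using aR prime_contains_a by blast
  then show "R \<inter> \<Inter> {P. prime_ideal R P \<and> P \<noteq> {0}} \<noteq> {0}" using a_nz by blast
qed

lemma inv_norm:
  assumes l: "l \<in> normalizer R" "l \<noteq> 0"
  shows "inverse l \<in> normalizer R"
proof -
  have "(\<lambda>r. inverse l * r) ` R = (\<lambda>r. r * inverse l) ` R"
  proof (intro equalityI subsetI)
    fix x assume "x \<in> (\<lambda>r. inverse l * r) ` R"
    then obtain r where r: "r \<in> R" "x = inverse l * r" by blast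
    have "x = (inverse l * r * l) * inverse l" using r l(2) by (simp add: mult.assoc)
    then show "x \<in> (\<lambda>r. r * inverse l) ` R" using norm_conj(2)[OF l r(1)] by blast
  next
    fix x assume "x \<in> (\<lambda>r. r * inverse l) ` R"
    then obtain r where r: "r \<in> R" "x = r * inverse l" by blast
    have "x = inverse l * (l * r * inverse l)" using r l(2) by (simp add: mult.assoc)
    then show "x \<in> (\<lambda>r. inverse l * r) ` R" using norm_conj(1)[OF l r(1)] by blast
  qed
  then show ?thesis by (simp add: normalizer_def)
qed

lemma Rl_univ:
  assumes l: "l \<in> normalizer R" "l \<noteq> 0" "l \<notin> R"
  shows "\<exists>n. d \<in> pset R l n"
proof -
  define B where "B = {x. \<exists>n. x \<in> pset R l n}"
  have mono: "p \<in> pset R l n \<Longrightarrow> n \<le> m \<Longrightarrow> p \<in> pset R l m" for p n m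
    using pset_mono[OF sR0 sRadd] by blast
  have mono1: "c \<in> R \<Longrightarrow> i \<le> n \<Longrightarrow> c * l^i \<in> pset R l n" for c i n
    using pset_mono1[OF sR0] by blast
  have "subring B"
    unfolding subring_def
  proof (intro conjI ballI)
    have "0 * l^0 \<in> pset R l 0" "1 * l^0 \<in> pset R l 0" using mono1 sR0 sR1 by blast+
    then show "0 \<in> B" "1 \<in> B" unfolding B_def by auto
    fix x assume "x \<in> B"
    then obtain n where xn: "x \<in> pset R l n" unfolding B_def by blast
    then obtain c where c: "x = (\<Sum>i\<le>n. c i * l^i)" "\<forall>i\<le>n. c i \<in> R" unfolding pset_def by blast
    have "- x = (\<Sum>i\<le>n. (- c i) * l^i)" using c by (simp add: sum_negf)
    moreover have "\<forall>i\<le>n. - c i \<in> R" using c sRneg by blast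
    ultimately have "- x \<in> pset R l n" using psetI[of n "\<lambda>i. - c i" R l] by simp
    then show "- x \<in> B" unfolding B_def by blast
    fix y assume "y \<in> B"
    then obtain m where ym: "y \<in> pset R l m" unfolding B_def by blast
    then obtain d where d: "y = (\<Sum>j\<le>m. d j * l^j)" "\<forall>j\<le>m. d j \<in> R" unfolding pset_def by blast
    have "x + y \<in> pset R l (n + m)"
      by (rule pset_add[OF sRadd]) (use mono xn ym in auto)
    then show "x + y \<in> B" unfolding B_def by blast
    have "x * y = (\<Sum>i\<le>n. \<Sum>j\<le>m. (c i * l^i) * (d j * l^j))" using c d by (simp add: sum_product)
    moreover have "(\<Sum>i\<le>n. \<Sum>j\<le>m. (c i * l^i) * (d j * l^j)) \<in> pset R l (n + m)"
    proof (rule pset_sum[OF sR0 sRadd])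
      show "finite {..n}" by simp
      fix i assume i: "i \<in> {..n}"
      show "(\<Sum>j\<le>m. (c i * l^i) * (d j * l^j)) \<in> pset R l (n + m)"
      proof (rule pset_sum[OF sR0 sRadd])
        show "finite {..m}" by simp
        fix j assume j: "j \<in> {..m}"
        have "(c i * l^i) * (d j * l^j) = (c i * (l^i * d j * inverse (l^i))) * l^(i+j)"
          using l(2) by (simp add: mult.assoc power_add)
        moreover have "c i * (l^i * d j * inverse (l^i)) \<in> R"
          using sRmul c(2) d(2) i j norm_conj_pow[OF l(1,2)] by simp
        moreover have "i + j \<le> n + m" using i j by simp
        ultimately show "(c i * l^i) * (d j * l^j) \<in> pset R l (n + m)" using mono1 by simp
      qed
    qed
    ultimately show "x * y \<in> B" unfolding B_def by auto
  qed
  moreover have "R \<subseteq> B"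
  proof
    fix r assume "r \<in> R"
    then have "r * l^0 \<in> pset R l 0" using mono1 by blast
    then show "r \<in> B" unfolding B_def by auto
  qed
  moreover have "l \<in> B"
  proof -
    have "1 * l^1 \<in> pset R l 1" using mono1 sR1 by blast
    then show ?thesis unfolding B_def by auto
  qed
  ultimately have "B = UNIV" using maxR l(3) unfolding maximal_subring_def by blast
  then show ?thesis unfolding B_def by blast
qed

lemma norm_val: "l \<in> normalizer R \<Longrightarrow> l \<in> R \<or> inverse l \<in> R"
proof (rule ccontr)
  assume l: "l \<in> normalizer R" and nn: "\<not> (l \<in> R \<or> inverse l \<in> R)"
  have l0: "l \<noteq> 0" using nn sR0 by auto
  define Ia where "Ia = {r * a | r. r \<in> R}"
  have I0: "0 \<in> Ia" unfolding Ia_def using sR0 by (metis (mono_tags, lifting) mem_Collect_eq mult_zero_left)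
  have Iadd: "x \<in> Ia \<Longrightarrow> y \<in> Ia \<Longrightarrow> x + y \<in> Ia" for x y
    unfolding Ia_def using sRadd by (auto simp: distrib_right[symmetric])
  have Imul: "r \<in> R \<Longrightarrow> m \<in> Ia \<Longrightarrow> r * m \<in> Ia" for r m
    unfolding Ia_def using sRmul by (auto simp: mult.assoc[symmetric])
  have IR: "Ia \<subseteq> R" unfolding Ia_def using sRmul aR by auto
  have Iunit: "m \<in> Ia \<Longrightarrow> \<exists>v\<in>R. v * (1 - m) = 1" for m
  proof -
    assume "m \<in> Ia"
    then obtain r where "r \<in> R" "m = r * a" unfolding Ia_def by blast
    then show ?thesis using unit_1ma by simp
  qed
  have one: "\<exists>n. 1 \<in> pset Ia y n" if y: "y \<in> normalizer R" "y \<noteq> 0" "y \<notin> R" for y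
  proof -
    obtain n where "inverse a \<in> pset R y n" using Rl_univ[OF y] by blast
    then obtain c where c: "inverse a = (\<Sum>i\<le>n. c i * y^i)" "\<forall>i\<le>n. c i \<in> R" unfolding pset_def by blast
    have "1 = a * inverse a" using a_nz by simp
    also have "\<dots> = (\<Sum>i\<le>n. (a * c i) * y^i)" unfolding c(1) by (simp add: sum_distrib_left mult.assoc)
    finally have e: "1 = (\<Sum>i\<le>n. (a * c i) * y^i)" .
    have "\<forall>i\<le>n. a * c i \<in> Ia"
    proof (intro allI impI)
      fix i assume "i \<le> n"
      then have "c i \<in> R" using c(2) by blast
      then have "a^1 * c i * inverse (a^1) \<in> R" by (rule conjR)
      moreover have "a * c i = (a^1 * c i * inverse (a^1)) * a" using a_nz by (simp add: mult.assoc)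
      ultimately show "a * c i \<in> Ia" unfolding Ia_def by blast
    qed
    then have "(\<Sum>i\<le>n. (a * c i) * y^i) \<in> pset Ia y n" by (rule psetI)
    then show ?thesis using e by (intro exI[of _ n]) simp
  qed
  have lR: "l \<notin> R" and ilR: "inverse l \<notin> R" using nn by auto
  have il0: "inverse l \<noteq> 0" using l0 by simp
  obtain n where n: "1 \<in> pset Ia l n" using one[OF l l0 lR] by (elim exE)
  obtain k where k: "1 \<in> pset Ia (inverse l) k" using one[OF inv_norm[OF l l0] il0 ilR] by (elim exE)
  show False by (rule pmain[OF I0 Iadd Imul IR sRmul Iunit l0 n k])
qed
end

theorem theorem2p4:
  fixes R :: "'a::division_ring set" and a :: 'a
  assumes noncomm: "\<exists>x y :: 'a. x * y \<noteq> y * x"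
    and maxR: "maximal_subring R"
    and aR: "a \<in> R" and a_nz: "a \<noteq> 0"
    and a_nonunit: "\<not> (\<exists>b\<in>R. a * b = 1 \<and> b * a = 1)"
    and a_normal: "(\<lambda>r. a * r) ` R = (\<lambda>r. r * a) ` R"
  shows
    "(left_ore_set R (range (\<lambda>n. a ^ n)) \<and> right_ore_set R (range (\<lambda>n. a ^ n)) \<and>
      {inverse (a ^ n) * r | n r. r \<in> R} = UNIV \<and>
      {r * inverse (a ^ n) | n r. r \<in> R} = UNIV)
   \<and> ((\<forall>I. left_ideal R I \<and> I \<noteq> {0} \<longrightarrow> (\<exists>n. a ^ n \<in> I)) \<and>
      (\<forall>I. right_ideal R I \<and> I \<noteq> {0} \<longrightarrow> (\<exists>n. a ^ n \<in> I)) \<and>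
      udim_left R = 1 \<and> udim_right R = 1 \<and> ore_domain_with_quotients_D R)
   \<and> (\<forall>P. prime_ideal R P \<and> P \<noteq> {0} \<longrightarrow> a \<in> P)
   \<and> a \<in> jacobson R
   \<and> (\<not> simple_ring R \<and> G_domain R)
   \<and> (\<forall>l\<in>normalizer R. l \<in> R \<or> inverse l \<in> R)"
proof -
  note H = maxR aR a_nz a_nonunit a_normal
  have i1: "\<forall>I. left_ideal R I \<and> I \<noteq> {0} \<longrightarrow> (\<exists>n. a ^ n \<in> I)"
  proof (intro allI impI)
    fix I assume "left_ideal R I \<and> I \<noteq> {0}"
    then obtain n where "\<forall>m\<ge>n. a^m \<in> I" using left_ideal_pow[OF H] by blast
    then show "\<exists>n. a ^ n \<in> I" by blast
  qed
  have i2: "\<forall>I. right_ideal R I \<and> I \<noteq> {0} \<longrightarrow> (\<exists>n. a ^ n \<in> I)"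
  proof (intro allI impI)
    fix I assume "right_ideal R I \<and> I \<noteq> {0}"
    then obtain n where "\<forall>m\<ge>n. a^m \<in> I" using right_ideal_pow[OF H] by blast
    then show "\<exists>n. a ^ n \<in> I" by blast
  qed
  have p: "\<forall>P. prime_ideal R P \<and> P \<noteq> {0} \<longrightarrow> a \<in> P" using prime_contains_a[OF H] by blast
  have v: "\<forall>l\<in>normalizer R. l \<in> R \<or> inverse l \<in> R" using norm_val[OF H] by blast
  show ?thesis
    using ore_left[OF H] ore_right[OF H] TT_univ[OF H] TT2_univ[OF H] i1 i2 udim_l[OF H] udim_r[OF H]
      ore_dom[OF H] p a_jac[OF H] not_simple[OF H] gdom[OF H] v by blast
qed

end
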